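(* Let $\mathbb{F}$ be a field, $m,b\in\mathbb{F}$ with $m\neq0$, $m\neq1$. Consider the reduction system $\Gamma$ in $\mathbb{F}\langle A,B,C\rangle$ consisting of the pairs $\alpha=\left(AB,\frac{mC-bI}{m-1}\right)$, $\beta=(AC,mCA)$, $\gamma=\left(BA,\frac{C-bI}{m-1}\right)$, $\delta=(CB,mBC)$, and $\varepsilon(k)=\left(BC^kA,\frac{C^{k+1}-bC^k}{m^k(m-1)}\right)$ for $k=1,2,\ldots$. Then $\Gamma$ has no inclusion ambiguities and every (overlap) ambiguity of $\Gamma$ is resolvable.
   Context: A reduction system in $\mathbb{F}\langle A,B,C\rangle$ is a set $S$ of pairs $\mu=(W_\mu,f_\mu)$ with $W_\mu$ a word (element of the free monoid on $A,B,C$) and $f_\mu\in\mathbb{F}\langle A,B,C\rangle$. For words $L,R$ and $\mu\in S$, the reduction $r_{L\mu R}$ is the linear map of $\mathbb{F}\langle A,B,C\rangle$ fixing every word except $LW_\mu R$, which it sends to $Lf_\mu R$. An overlap ambiguity is a tuple $(\mu,\nu,L,X,R)$ with $\mu,\nu\in S$, $L,X,R$ nonempty words, $W_\mu=LX$, $W_\nu=XR$; it is resolvable if there are finite compositions of reductions $\lambda,\rho$ with $\lambda(f_\mu R)=\rho(Lf_\nu)$. An inclusion ambiguity is $(\mu,\nu,L,X,R)$ with $\mu\ne\nu$, $W_\mu=X$, $W_\nu=LXR$; it is resolvable if $\lambda(Lf_\mu R)=\rho(f_\nu)$ for some compositions of reductions $\lambda,\rho$. *)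

theory Defs
  imports Main "HOL-Library.Poly_Mapping"
begin

text \<open>The free algebra F<A,B,C>: finitely supported functions from words
  (lists of letters) to the field.\<close>

datatype letter = LA | LB | LC

type_synonym word = "letter list"
type_synonym 'a falg = "word \<Rightarrow>\<^sub>0 'a"

definition mon :: "word \<Rightarrow> 'a::zero \<Rightarrow> 'a falg" where
  "mon w c = Poly_Mapping.single w c"

definition scal :: "'a::semiring_0 \<Rightarrow> 'a falg \<Rightarrow> 'a falg" where
  "scal a f = Poly_Mapping.map (\<lambda>c. a * c) f"

definition sandwich :: "word \<Rightarrow> 'a::comm_monoid_add falg \<Rightarrow> word \<Rightarrow> 'a falg" where
  "sandwich L f R = (\<Sum>u\<in>Poly_Mapping.keys f. Poly_Mapping.single (L @ u @ R) (Poly_Mapping.lookup f u))"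

type_synonym 'a rule = "word \<times> 'a falg"

definition red :: "word \<Rightarrow> 'a::ring_1 rule \<Rightarrow> word \<Rightarrow> 'a falg \<Rightarrow> 'a falg" where
  "red L \<mu> R g =
     (let w = L @ fst \<mu> @ R; c = Poly_Mapping.lookup g w
      in g - Poly_Mapping.single w c + scal c (sandwich L (snd \<mu>) R))"

inductive_set reds :: "'a::ring_1 rule set \<Rightarrow> ('a falg \<Rightarrow> 'a falg) set" for S where
  reds_id: "id \<in> reds S"
| reds_step: "\<phi> \<in> reds S \<Longrightarrow> \<mu> \<in> S \<Longrightarrow> red L \<mu> R \<circ> \<phi> \<in> reds S"

definition overlap_amb :: "'a::ring_1 rule set \<Rightarrow> 'a rule \<Rightarrow> 'a rule \<Rightarrow> word \<Rightarrow> word \<Rightarrow> word \<Rightarrow> bool" where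
  "overlap_amb S \<mu> \<nu> L X R \<longleftrightarrow> \<mu> \<in> S \<and> \<nu> \<in> S \<and> L \<noteq> [] \<and> X \<noteq> [] \<and> R \<noteq> [] \<and>
     fst \<mu> = L @ X \<and> fst \<nu> = X @ R"

definition overlap_resolvable :: "'a::ring_1 rule set \<Rightarrow> 'a rule \<Rightarrow> 'a rule \<Rightarrow> word \<Rightarrow> word \<Rightarrow> word \<Rightarrow> bool" where
  "overlap_resolvable S \<mu> \<nu> L X R \<longleftrightarrow>
     (\<exists>lam\<in>reds S. \<exists>\<rho>\<in>reds S. lam (sandwich [] (snd \<mu>) R) = \<rho> (sandwich L (snd \<nu>) []))"

definition incl_amb :: "'a::ring_1 rule set \<Rightarrow> 'a rule \<Rightarrow> 'a rule \<Rightarrow> word \<Rightarrow> word \<Rightarrow> word \<Rightarrow> bool" where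
  "incl_amb S \<mu> \<nu> L X R \<longleftrightarrow> \<mu> \<in> S \<and> \<nu> \<in> S \<and> \<mu> \<noteq> \<nu> \<and> fst \<mu> = X \<and> fst \<nu> = L @ X @ R"

definition incl_resolvable :: "'a::ring_1 rule set \<Rightarrow> 'a rule \<Rightarrow> 'a rule \<Rightarrow> word \<Rightarrow> word \<Rightarrow> word \<Rightarrow> bool" where
  "incl_resolvable S \<mu> \<nu> L X R \<longleftrightarrow>
     (\<exists>lam\<in>reds S. \<exists>\<rho>\<in>reds S. lam (sandwich L (snd \<mu>) R) = \<rho> (snd \<nu>))"

definition Gamma :: "'a::field \<Rightarrow> 'a \<Rightarrow> 'a rule set" where
  "Gamma m b =
     {([LA, LB], scal (1 / (m - 1)) (mon [LC] m - mon [] b)),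
      ([LA, LC], mon [LC, LA] m),
      ([LB, LA], scal (1 / (m - 1)) (mon [LC] 1 - mon [] b)),
      ([LC, LB], mon [LB, LC] m)} \<union>
     {(LB # replicate k LC @ [LA],
       scal (1 / (m ^ k * (m - 1))) (mon (replicate (k + 1) LC) 1 - mon (replicate k LC) b))
      | k::nat. k \<ge> 1}"

end

theory Submission
  imports Defs
begin


lemma lookup_scal: "Poly_Mapping.lookup (scal a f) w = a * Poly_Mapping.lookup f w"
  by (simp add: scal_def Poly_Mapping.map.rep_eq when_def)

lemma scal_diff: "scal (a::'a::ring) (f - g) = scal a f - scal a g"
  by (rule poly_mapping_eqI) (simp add: lookup_scal lookup_minus algebra_simps)
lemma scal_add: "scal a (f + g) = scal a f + scal a g"
  by (rule poly_mapping_eqI) (simp add: lookup_scal lookup_add algebra_simps)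
lemma scal_add_left: "scal (a + c) f = scal a f + scal c f"
  by (rule poly_mapping_eqI) (simp add: lookup_scal lookup_add algebra_simps)
lemma scal_diff_left: "scal ((a::'a::ring) - c) f = scal a f - scal c f"
  by (rule poly_mapping_eqI) (simp add: lookup_scal lookup_minus algebra_simps)
lemma scal_zero_left[simp]: "scal 0 f = 0"
  by (rule poly_mapping_eqI) (simp add: lookup_scal)
lemma scal_mon[simp]: "scal a (mon u c) = mon u (a * c)"
  by (rule poly_mapping_eqI) (simp add: lookup_scal mon_def lookup_single when_def)

lemma sandwich_superset:
  assumes "finite K" "Poly_Mapping.keys f \<subseteq> K"
  shows "sandwich L f R = (\<Sum>u\<in>K. Poly_Mapping.single (L @ u @ R) (Poly_Mapping.lookup f u))"
  unfolding sandwich_def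
  by (rule sum.mono_neutral_left) (use assms in \<open>auto simp: in_keys_iff\<close>)

lemma sandwich_add: "sandwich L (f + g) R = sandwich L f R + sandwich L g R"
proof -
  let ?K = "Poly_Mapping.keys f \<union> Poly_Mapping.keys g"
  have fk: "finite ?K" by simp
  have "Poly_Mapping.keys (f+g) \<subseteq> ?K" by (rule keys_add)
  then show ?thesis
    using sandwich_superset[OF fk, of "f+g"] sandwich_superset[OF fk, of f] sandwich_superset[OF fk, of g]
    by (simp add: lookup_add single_add sum.distrib)
qed

lemma sandwich_diff: "sandwich L (f - g::'a::ab_group_add falg) R = sandwich L f R - sandwich L g R"
proof -
  let ?K = "Poly_Mapping.keys f \<union> Poly_Mapping.keys g"
  have fk: "finite ?K" by simp
  have "Poly_Mapping.keys (f-g) \<subseteq> ?K"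
    by (auto simp: in_keys_iff lookup_minus)
  then show ?thesis
    using sandwich_superset[OF fk, of "f-g"] sandwich_superset[OF fk, of f] sandwich_superset[OF fk, of g]
    by (simp add: lookup_minus single_diff sum_subtractf)
qed

lemma sandwich_mon[simp]: "sandwich L (mon u c) R = mon (L @ u @ R) c"
  by (cases "c = 0") (simp_all add: sandwich_def mon_def)

lemma red_mon:
  "red L \<mu> R (mon w c) = (if w = L @ fst \<mu> @ R then scal c (sandwich L (snd \<mu>) R) else mon w c)"
  by (auto simp: red_def mon_def lookup_single when_def)

lemma red_add: "red L \<mu> R (f + g) = red L \<mu> R f + red L \<mu> R g"
  by (simp add: red_def Let_def lookup_add single_add scal_add_left algebra_simps)

lemma red_diff: "red L \<mu> R (f - g) = red L \<mu> R f - red L \<mu> R g"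
  by (simp add: red_def Let_def lookup_minus single_diff scal_diff_left algebra_simps)


lemma reds_comp: "\<psi> \<in> reds S \<Longrightarrow> \<phi> \<in> reds S \<Longrightarrow> \<psi> \<circ> \<phi> \<in> reds S"
  by (induction rule: reds.induct) (auto simp: comp_assoc intro: reds.intros)

lemma reds_red: "\<mu> \<in> S \<Longrightarrow> red L \<mu> R \<in> reds S"
  using reds_step[OF reds_id] by simp

lemma reds_add: "\<phi> \<in> reds S \<Longrightarrow> \<phi> (f + g) = \<phi> f + \<phi> g"
  by (induction rule: reds.induct) (auto simp: red_add)

lemma reds_diff: "\<phi> \<in> reds S \<Longrightarrow> \<phi> (f - g) = \<phi> f - \<phi> g"
  by (induction rule: reds.induct) (auto simp: red_diff)

definition ra :: "'a::field \<Rightarrow> 'a \<Rightarrow> 'a rule" where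
  "ra m b = ([LA, LB], scal (1 / (m - 1)) (mon [LC] m - mon [] b))"
definition rb :: "'a::field \<Rightarrow> 'a rule" where
  "rb m = ([LA, LC], mon [LC, LA] m)"
definition rc :: "'a::field \<Rightarrow> 'a \<Rightarrow> 'a rule" where
  "rc m b = ([LB, LA], scal (1 / (m - 1)) (mon [LC] 1 - mon [] b))"
definition rd :: "'a::field \<Rightarrow> 'a rule" where
  "rd m = ([LC, LB], mon [LB, LC] m)"
definition re :: "'a::field \<Rightarrow> 'a \<Rightarrow> nat \<Rightarrow> 'a rule" where
  "re m b k = (LB # replicate k LC @ [LA],
       scal (1 / (m ^ k * (m - 1))) (mon (replicate (k + 1) LC) 1 - mon (replicate k LC) b))"

lemma Gamma_alt: "Gamma m b = {ra m b, rb m, rc m b, rd m} \<union> {re m b k | k. k \<ge> 1}"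
  by (simp add: Gamma_def ra_def rb_def rc_def rd_def re_def)

lemma in_G: "ra m b \<in> Gamma m b" "rb m \<in> Gamma m b" "rc m b \<in> Gamma m b" "rd m \<in> Gamma m b"
  "k \<ge> 1 \<Longrightarrow> re m b k \<in> Gamma m b"
  by (auto simp: Gamma_alt)

lemma beta_chain:
  "\<exists>\<phi>\<in>reds (Gamma m b). (\<forall>w c. w = P @ LA # replicate j LC \<longrightarrow>
        \<phi> (mon w c) = mon (P @ replicate j LC @ [LA]) (m ^ j * c)) \<and>
     (\<forall>u c. length u \<noteq> length P + j + 1 \<longrightarrow> \<phi> (mon u c) = mon u c)"
proof (induction j arbitrary: P)
  case 0
  show ?case by (rule bexI[of _ id]) (auto intro: reds_id)
next
  case (Suc j)
  obtain \<phi> where ph: "\<phi> \<in> reds (Gamma m b)"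
    and h1: "\<forall>w c. w = (P @ [LC]) @ LA # replicate j LC \<longrightarrow>
        \<phi> (mon w c) = mon ((P @ [LC]) @ replicate j LC @ [LA]) (m ^ j * c)"
    and h2: "\<forall>u c. length u \<noteq> length (P @ [LC]) + j + 1 \<longrightarrow> \<phi> (mon u c) = mon u c"
    using Suc.IH[of "P @ [LC]"] by blast
  let ?r = "red P (rb m) (replicate j LC)"
  show ?case
  proof (rule bexI[of _ "\<phi> \<circ> ?r"], intro conjI allI impI)
    show "\<phi> \<circ> ?r \<in> reds (Gamma m b)" by (rule reds_comp[OF ph reds_red[OF in_G(2)]])
  next
    fix w c assume w: "w = P @ LA # replicate (Suc j) LC"
    have "?r (mon w c) = mon ((P @ [LC]) @ LA # replicate j LC) (c * m)"
      using w by (simp add: red_mon rb_def)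
    then show "(\<phi> \<circ> ?r) (mon w c) = mon (P @ replicate (Suc j) LC @ [LA]) (m ^ Suc j * c)"
      using h1 by (simp add: replicate_app_Cons_same mult_ac)
  next
    fix u :: word and c assume u: "length u \<noteq> length P + Suc j + 1"
    then have "?r (mon u c) = mon u c" by (auto simp: red_mon rb_def)
    then show "(\<phi> \<circ> ?r) (mon u c) = mon u c" using h2 u by simp
  qed
qed

lemma delta_chain:
  "\<exists>\<phi>\<in>reds (Gamma m b). (\<forall>w c. w = replicate j LC @ LB # S \<longrightarrow>
        \<phi> (mon w c) = mon (LB # replicate j LC @ S) (m ^ j * c)) \<and>
     (\<forall>u c. length u \<noteq> j + 1 + length S \<longrightarrow> \<phi> (mon u c) = mon u c)"
proof (induction j arbitrary: S)
  case 0
  show ?case by (rule bexI[of _ id]) (auto intro: reds_id)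
next
  case (Suc j)
  obtain \<phi> where ph: "\<phi> \<in> reds (Gamma m b)"
    and h1: "\<forall>w c. w = replicate j LC @ LB # (LC # S) \<longrightarrow>
        \<phi> (mon w c) = mon (LB # replicate j LC @ (LC # S)) (m ^ j * c)"
    and h2: "\<forall>u c. length u \<noteq> j + 1 + length (LC # S) \<longrightarrow> \<phi> (mon u c) = mon u c"
    using Suc.IH[of "LC # S"] by blast
  let ?r = "red (replicate j LC) (rd m) S"
  show ?case
  proof (rule bexI[of _ "\<phi> \<circ> ?r"], intro conjI allI impI)
    show "\<phi> \<circ> ?r \<in> reds (Gamma m b)" by (rule reds_comp[OF ph reds_red[OF in_G(4)]])
  next
    fix w c assume w: "w = replicate (Suc j) LC @ LB # S"
    have "w = replicate j LC @ [LC, LB] @ S" using w by (simp add: replicate_append_same[symmetric])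
    then have "?r (mon w c) = mon (replicate j LC @ LB # (LC # S)) (c * m)"
      by (simp add: red_mon rd_def)
    then show "(\<phi> \<circ> ?r) (mon w c) = mon (LB # replicate (Suc j) LC @ S) (m ^ Suc j * c)"
      using h1 by (simp add: replicate_app_Cons_same mult_ac)
  next
    fix u :: word and c assume u: "length u \<noteq> Suc j + 1 + length S"
    then have "?r (mon u c) = mon u c" by (auto simp: red_mon rd_def)
    then show "(\<phi> \<circ> ?r) (mon u c) = mon u c" using h2 u by simp
  qed
qed


lemmas S = ra_def rb_def rc_def rd_def re_def scal_diff sandwich_diff red_diff red_mon

lemma resI: "lam \<in> reds S \<Longrightarrow> rho \<in> reds S \<Longrightarrow>
  lam (sandwich [] (snd \<mu>) R) = rho (sandwich L (snd \<nu>) []) \<Longrightarrow> overlap_resolvable S \<mu> \<nu> L X R"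
  unfolding overlap_resolvable_def by blast

lemma res1: "overlap_resolvable (Gamma m b) (ra m b) (rc m b) [LA] X [LA]"
  by (rule resI[where lam=id and rho="red [] (rb m) []"], (intro reds_id reds_red in_G; simp)+) (simp add: S mult_ac)

lemma res3: "overlap_resolvable (Gamma m b) (rb m) (rd m) [LA] X [LB]"
  by (rule resI[where lam="red [LC] (ra m b) []" and rho="red [] (ra m b) [LC]"], (intro reds_id reds_red in_G; simp)+) (simp add: S mult_ac)

lemma res4: "overlap_resolvable (Gamma m b) (rc m b) (ra m b) [LB] X [LB]"
  by (rule resI[where lam="red [] (rd m) []" and rho=id], (intro reds_id reds_red in_G; simp)+) (simp add: S mult_ac)

lemma res5: assumes "m \<noteq> 0" shows "overlap_resolvable (Gamma m b) (rc m b) (rb m) [LB] X [LC]"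
  by (rule resI[where lam=id and rho="red [] (re m b 1) []"], (intro reds_id reds_red in_G; simp)+) (use assms in \<open>simp add: S mult_ac\<close>)

lemma res6: assumes "m \<noteq> 0" shows "overlap_resolvable (Gamma m b) (rd m) (rc m b) [LC] X [LA]"
  by (rule resI[where rho=id and lam="red [] (re m b 1) []"], (intro reds_id reds_red in_G; simp)+) (use assms in \<open>simp add: S mult_ac\<close>)


lemmas S2 = S replicate_app_Cons_same replicate_append_same

lemma res7: assumes m0: "m \<noteq> 0" and m1: "m \<noteq> 1" and k: "k \<ge> 1"
  shows "overlap_resolvable (Gamma m b) (rd m) (re m b k) [LC] X (replicate k LC @ [LA])"
proof (rule resI[where rho=id and lam="red [] (re m b (Suc k)) []"])
  show "red [] (re m b (Suc k)) [] \<in> reds (Gamma m b)" by (intro reds_red in_G) simp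
  show "id \<in> reds (Gamma m b)" by (rule reds_id)
  have m1': "m - 1 \<noteq> 0" using m1 by simp
  have c1: "m * (1 / (m ^ Suc k * (m - 1))) = 1 / (m ^ k * (m - 1))" using m0 m1' by (simp add: field_simps)
  have c2: "m * (b / (m ^ Suc k * (m - 1))) = b / (m ^ k * (m - 1))" using m0 m1' by (simp add: field_simps)
  show "red [] (re m b (Suc k)) [] (sandwich [] (snd (rd m)) (replicate k LC @ [LA])) =
    id (sandwich [LC] (snd (re m b k)) [])"
    using c1 c2 by (simp add: S2)
qed

lemma res9: assumes m0: "m \<noteq> 0" and m1: "m \<noteq> 1" and k: "k \<ge> 1"
  shows "overlap_resolvable (Gamma m b) (re m b k) (rb m) (LB # replicate k LC) X [LC]"
proof (rule resI[where lam=id and rho="red [] (re m b (Suc k)) []"])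
  show "red [] (re m b (Suc k)) [] \<in> reds (Gamma m b)" by (intro reds_red in_G) simp
  show "id \<in> reds (Gamma m b)" by (rule reds_id)
  have m1': "m - 1 \<noteq> 0" using m1 by simp
  have c1: "m * (1 / (m ^ Suc k * (m - 1))) = 1 / (m ^ k * (m - 1))" using m0 m1' by (simp add: field_simps)
  have c2: "m * (b / (m ^ Suc k * (m - 1))) = b / (m ^ k * (m - 1))" using m0 m1' by (simp add: field_simps)
  show "id (sandwich [] (snd (re m b k)) [LC]) =
    red [] (re m b (Suc k)) [] (sandwich (LB # replicate k LC) (snd (rb m)) [])"
    using c1 c2 by (simp add: S2)
qed


lemma res2: assumes m0: "m \<noteq> 0" and m1: "m \<noteq> 1"
  shows "overlap_resolvable (Gamma m b) (ra m b) (re m b k) [LA] X (replicate k LC @ [LA])"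
proof -
  obtain \<phi>1 where p1: "\<phi>1 \<in> reds (Gamma m b)"
    and a1: "\<forall>w c. w = [] @ LA # replicate (Suc k) LC \<longrightarrow>
        \<phi>1 (mon w c) = mon ([] @ replicate (Suc k) LC @ [LA]) (m ^ Suc k * c)"
    and f1: "\<forall>u c. length u \<noteq> length ([]::word) + Suc k + 1 \<longrightarrow> \<phi>1 (mon u c) = mon u c"
    using beta_chain[of m b "[]" "Suc k"] by blast
  obtain \<phi>2 where p2: "\<phi>2 \<in> reds (Gamma m b)"
    and a2: "\<forall>w c. w = [] @ LA # replicate k LC \<longrightarrow>
        \<phi>2 (mon w c) = mon ([] @ replicate k LC @ [LA]) (m ^ k * c)"
    and f2: "\<forall>u c. length u \<noteq> length ([]::word) + k + 1 \<longrightarrow> \<phi>2 (mon u c) = mon u c"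
    using beta_chain[of m b "[]" k] by blast
  have m1': "m - 1 \<noteq> 0" using m1 by simp
  have c1: "m ^ Suc k * (1 / (m ^ k * (m - 1))) = m / (m - 1)" using m0 m1' by (simp add: field_simps)
  have c2: "m ^ k * (b / (m ^ k * (m - 1))) = b / (m - 1)" using m0 m1' by (simp add: field_simps)
  have rhs: "sandwich [LA] (snd (re m b k)) [] =
      mon (LA # replicate (Suc k) LC) (1 / (m ^ k * (m - 1))) - mon (LA # replicate k LC) (b / (m ^ k * (m - 1)))"
    by (simp add: S2)
  have "(\<phi>2 \<circ> \<phi>1) (sandwich [LA] (snd (re m b k)) []) =
      mon (replicate (Suc k) LC @ [LA]) (m / (m - 1)) - mon (replicate k LC @ [LA]) (b / (m - 1))"
  proof -
    have e1: "\<phi>1 (mon (LA # replicate (Suc k) LC) (1 / (m ^ k * (m - 1)))) = mon (replicate (Suc k) LC @ [LA]) (m / (m - 1))"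
      using a1 c1 by simp
    have e2: "\<phi>1 (mon (LA # replicate k LC) (b / (m ^ k * (m - 1)))) = mon (LA # replicate k LC) (b / (m ^ k * (m - 1)))"
      using f1 by simp
    have e3: "\<phi>2 (mon (replicate (Suc k) LC @ [LA]) (m / (m - 1))) = mon (replicate (Suc k) LC @ [LA]) (m / (m - 1))"
      using f2 by simp
    have e4: "\<phi>2 (mon (LA # replicate k LC) (b / (m ^ k * (m - 1)))) = mon (replicate k LC @ [LA]) (b / (m - 1))"
      using a2 c2 by simp
    show ?thesis
      unfolding rhs comp_def reds_diff[OF p1] reds_diff[OF p2] e1 e2 e3 e4 ..
  qed
  moreover have "sandwich [] (snd (ra m b)) (replicate k LC @ [LA]) =
      mon (replicate (Suc k) LC @ [LA]) (m / (m - 1)) - mon (replicate k LC @ [LA]) (b / (m - 1))"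
    by (simp add: S2)
  ultimately show ?thesis
    by (intro resI[where lam=id and rho="\<phi>2 \<circ> \<phi>1"] reds_id reds_comp p1 p2) simp
qed

lemma res8: assumes m0: "m \<noteq> 0" and m1: "m \<noteq> 1"
  shows "overlap_resolvable (Gamma m b) (re m b k) (ra m b) (LB # replicate k LC) X [LB]"
proof -
  obtain \<phi>1 where p1: "\<phi>1 \<in> reds (Gamma m b)"
    and a1: "\<forall>w c. w = replicate (Suc k) LC @ LB # [] \<longrightarrow>
        \<phi>1 (mon w c) = mon (LB # replicate (Suc k) LC @ []) (m ^ Suc k * c)"
    and f1: "\<forall>u c. length u \<noteq> Suc k + 1 + length ([]::word) \<longrightarrow> \<phi>1 (mon u c) = mon u c"
    using delta_chain[of m b "Suc k" "[]"] by blast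
  obtain \<phi>2 where p2: "\<phi>2 \<in> reds (Gamma m b)"
    and a2: "\<forall>w c. w = replicate k LC @ LB # [] \<longrightarrow>
        \<phi>2 (mon w c) = mon (LB # replicate k LC @ []) (m ^ k * c)"
    and f2: "\<forall>u c. length u \<noteq> k + 1 + length ([]::word) \<longrightarrow> \<phi>2 (mon u c) = mon u c"
    using delta_chain[of m b k "[]"] by blast
  have m1': "m - 1 \<noteq> 0" using m1 by simp
  have c1: "m ^ Suc k * (1 / (m ^ k * (m - 1))) = m / (m - 1)" using m0 m1' by (simp add: field_simps)
  have c2: "m ^ k * (b / (m ^ k * (m - 1))) = b / (m - 1)" using m0 m1' by (simp add: field_simps)
  have lhs: "sandwich [] (snd (re m b k)) [LB] =
      mon (replicate (Suc k) LC @ [LB]) (1 / (m ^ k * (m - 1))) - mon (replicate k LC @ [LB]) (b / (m ^ k * (m - 1)))"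
    by (simp add: S)
  have "(\<phi>2 \<circ> \<phi>1) (sandwich [] (snd (re m b k)) [LB]) =
      mon (LB # replicate (Suc k) LC) (m / (m - 1)) - mon (LB # replicate k LC) (b / (m - 1))"
  proof -
    have e1: "\<phi>1 (mon (replicate (Suc k) LC @ [LB]) (1 / (m ^ k * (m - 1)))) = mon (LB # replicate (Suc k) LC) (m / (m - 1))"
      using a1 c1 by simp
    have e2: "\<phi>1 (mon (replicate k LC @ [LB]) (b / (m ^ k * (m - 1)))) = mon (replicate k LC @ [LB]) (b / (m ^ k * (m - 1)))"
      using f1 by simp
    have e3: "\<phi>2 (mon (LB # replicate (Suc k) LC) (m / (m - 1))) = mon (LB # replicate (Suc k) LC) (m / (m - 1))"
      using f2 by simp
    have e4: "\<phi>2 (mon (replicate k LC @ [LB]) (b / (m ^ k * (m - 1)))) = mon (LB # replicate k LC) (b / (m - 1))"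
      using a2 c2 by simp
    show ?thesis
      unfolding lhs comp_def reds_diff[OF p1] reds_diff[OF p2] e1 e2 e3 e4 ..
  qed
  moreover have "sandwich (LB # replicate k LC) (snd (ra m b)) [] =
      mon (LB # replicate (Suc k) LC) (m / (m - 1)) - mon (LB # replicate k LC) (b / (m - 1))"
    by (simp add: S2)
  ultimately show ?thesis
    by (intro resI[where rho=id and lam="\<phi>2 \<circ> \<phi>1"] reds_id reds_comp p1 p2) simp
qed


lemma fsts[simp]: "fst (ra m b) = [LA,LB]" "fst (rb m) = [LA,LC]" "fst (rc m b) = [LB,LA]"
  "fst (rd m) = [LC,LB]" "fst (re m b k) = LB # replicate k LC @ [LA]"
  by (simp_all add: ra_def rb_def rc_def rd_def re_def)

lemma eps_eps: "L @ X = LB # replicate k LC @ [LA] \<Longrightarrow> X @ R = LB # Y \<Longrightarrow> L \<noteq> [] \<Longrightarrow> X \<noteq> [] \<Longrightarrow> False"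
proof -
  assume a: "L @ X = LB # replicate k LC @ [LA]" "X @ R = LB # Y" "L \<noteq> []" "X \<noteq> []"
  then obtain x L' where L: "L = x # L'" by (cases L) auto
  with a have "L' @ X = replicate k LC @ [LA]" by simp
  then have "set X \<subseteq> {LC, LA}" by (metis Un_upper2 set_append set_replicate_conv_if empty_set insert_is_Un list.simps(15) subset_insertI subset_trans Un_subset_iff set_subset_Cons insert_subset order_refl)
  moreover have "LB \<in> set X" using a(2) a(4) by (cases X) auto
  ultimately show False by auto
qed

lemma two_any: "[a,c] = L @ X \<Longrightarrow> L \<noteq> [] \<Longrightarrow> X \<noteq> [] \<Longrightarrow> L = [a] \<and> X = [c]"
  by (auto simp: Cons_eq_append_conv)
lemma any_two: "[c,d] = X @ R \<Longrightarrow> R \<noteq> [] \<Longrightarrow> X \<noteq> [] \<Longrightarrow> X = [c] \<and> R = [d]"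
  by (auto simp: Cons_eq_append_conv)
lemma eps_L: "LB # replicate k LC @ [LA] = L @ [c] \<Longrightarrow> c = LA \<and> L = LB # replicate k LC"
proof -
  assume "LB # replicate k LC @ [LA] = L @ [c]"
  then have "(LB # replicate k LC) @ [LA] = L @ [c]" by simp
  then show ?thesis by (metis append1_eq_conv)
qed
lemma eps_eps': "LB # replicate k LC @ [LA] = L @ X \<Longrightarrow> LB # Y = X @ R \<Longrightarrow> L \<noteq> [] \<Longrightarrow> X \<noteq> [] \<Longrightarrow> False"
  using eps_eps by metis

lemma ov_res: assumes m0: "m \<noteq> 0" and m1: "m \<noteq> 1" and ov: "overlap_amb (Gamma m b) \<mu> \<nu> L X R"
  shows "overlap_resolvable (Gamma m b) \<mu> \<nu> L X R"
proof -
  from ov have mu: "\<mu> \<in> Gamma m b" and nu: "\<nu> \<in> Gamma m b" and ne: "L \<noteq> []" "X \<noteq> []" "R \<noteq> []"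
    and x: "fst \<mu> = L @ X" and y: "fst \<nu> = X @ R" by (auto simp: overlap_amb_def)
  have dm: "\<mu> = ra m b \<or> \<mu> = rb m \<or> \<mu> = rc m b \<or> \<mu> = rd m \<or> (\<exists>k\<ge>1. \<mu> = re m b k)"
    using mu by (auto simp: Gamma_alt)
  have dn: "\<nu> = ra m b \<or> \<nu> = rb m \<or> \<nu> = rc m b \<or> \<nu> = rd m \<or> (\<exists>k\<ge>1. \<nu> = re m b k)"
    using nu by (auto simp: Gamma_alt)
  show ?thesis
    using dm dn x y ne
    apply (elim disjE exE conjE)
    apply (auto dest!: two_any any_two eps_L intro: res1 res3 res4 res5 res6 res7 res8 res9 res2 simp: m0 m1)
    apply (simp_all add: res2[OF m0 m1] res7[OF m0 m1])
    apply (metis eps_eps')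
    done
qed


lemma nth_w: "n \<le> j + 1 \<Longrightarrow> (LB # replicate j LC @ [LA]) ! n = (if n = 0 then LB else if n \<le> j then LC else LA)"
  by (cases n) (auto simp: nth_append)

lemma nth_infix: "i < length X \<Longrightarrow> (L @ X @ R) ! (length L + i) = X ! i"
  by (simp add: nth_append)

lemma infix2:
  assumes e: "L @ [p,q] @ R = LB # replicate j LC @ [LA]" and j: "j \<ge> 1"
  shows "(p = LB \<and> q = LC) \<or> (p = LC \<and> q = LC) \<or> (p = LC \<and> q = LA)"
proof -
  let ?n = "length L"
  have len: "?n + 2 + length R = j + 2" using arg_cong[OF e, of length] by simp
  have p: "(LB # replicate j LC @ [LA]) ! ?n = p" unfolding e[symmetric] by (simp add: nth_append)
  have q: "(LB # replicate j LC @ [LA]) ! (?n + 1) = q" unfolding e[symmetric] by (simp add: nth_append)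
  show ?thesis using p q len j nth_w[of ?n j] nth_w[of "?n+1" j] by (auto split: if_splits)
qed

lemma infix_eps:
  assumes e: "L @ (LB # replicate k LC @ [LA]) @ R = LB # replicate j LC @ [LA]"
  shows "k = j"
proof -
  let ?n = "length L"
  have len: "?n + k + 2 + length R = j + 2" using arg_cong[OF e, of length] by simp
  have p: "(LB # replicate j LC @ [LA]) ! ?n = LB"
    unfolding e[symmetric] by (simp add: nth_append)
  then have n0: "?n = 0" using len nth_w[of ?n j] by (auto split: if_splits)
  have q: "(LB # replicate j LC @ [LA]) ! (?n + (k+1)) = LA"
    unfolding e[symmetric] by (simp add: nth_append)
  then have "\<not> k + 1 \<le> j" using n0 len nth_w[of "k+1" j] by (auto split: if_splits)
  then show ?thesis using len by simp
qed

lemma no_incl: "\<not> incl_amb (Gamma m b) \<mu> \<nu> L X R"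
proof
  assume "incl_amb (Gamma m b) \<mu> \<nu> L X R"
  then have mu: "\<mu> \<in> Gamma m b" and nu: "\<nu> \<in> Gamma m b" and ne: "\<mu> \<noteq> \<nu>"
    and x: "fst \<mu> = X" and y: "fst \<nu> = L @ X @ R" by (auto simp: incl_amb_def)
  have dm: "\<mu> = ra m b \<or> \<mu> = rb m \<or> \<mu> = rc m b \<or> \<mu> = rd m \<or> (\<exists>k\<ge>1. \<mu> = re m b k)"
    using mu by (auto simp: Gamma_alt)
  have dn: "\<nu> = ra m b \<or> \<nu> = rb m \<or> \<nu> = rc m b \<or> \<nu> = rd m \<or> (\<exists>k\<ge>1. \<nu> = re m b k)"
    using nu by (auto simp: Gamma_alt)
  have lenX: "length X \<ge> 2" using dm x by auto
  show False
  proof (cases "\<nu> = ra m b \<or> \<nu> = rb m \<or> \<nu> = rc m b \<or> \<nu> = rd m")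
    case True
    then have "length (fst \<nu>) = 2" by auto
    with y have "length L + length X + length R = 2" by simp
    with lenX have "length L = 0 \<and> length R = 0" by arith
    then have "L = [] \<and> R = []" by simp
    then have "fst \<mu> = fst \<nu>" using x y by simp
    with dm True ne show False by (auto simp: ra_def rb_def rc_def rd_def re_def)
  next
    case False
    then obtain j where j: "j \<ge> 1" "\<nu> = re m b j" using dn by auto
    show False
    proof (cases "\<mu> = ra m b \<or> \<mu> = rb m \<or> \<mu> = rc m b \<or> \<mu> = rd m")
      case True
      then obtain p q where pq: "X = [p,q]" "(p,q) \<in> {(LA,LB),(LA,LC),(LB,LA),(LC,LB)}" using x by auto
      from y j pq have "L @ [p,q] @ R = LB # replicate j LC @ [LA]" by simp
      from infix2[OF this j(1)] pq(2) show False by auto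
    next
      case False
      then obtain k where k: "\<mu> = re m b k" using dm by auto
      from y x j k have "L @ (LB # replicate k LC @ [LA]) @ R = LB # replicate j LC @ [LA]" by simp
      then have "k = j" by (rule infix_eps)
      with k j ne show False by simp
    qed
  qed
qed

theorem lemma3p2:
  fixes m b :: "'a::field"
  assumes "m \<noteq> 0" and "m \<noteq> 1"
  shows "(\<forall>\<mu> \<nu> L X R. \<not> incl_amb (Gamma m b) \<mu> \<nu> L X R) \<and>
         (\<forall>\<mu> \<nu> L X R. overlap_amb (Gamma m b) \<mu> \<nu> L X R \<longrightarrow>
              overlap_resolvable (Gamma m b) \<mu> \<nu> L X R)"
  using no_incl ov_res[OF assms] by blast

end
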